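(* In Ruleset A, for any superposition of single Nim heaps whose largest heap has size $k\ge1$, $\langle \mathrm{Nim}(i_1),\ldots,\mathrm{Nim}(i_\ell)\rangle_A\equiv *(k-1)$, where $k=\max_{1\le j\le \ell} i_j$.
   Context: Single-heap Nim: $\mathrm{Nim}(x)$ is a heap of $x$ tokens; classical move $(1,-j)$, $j\ge1$, removes $j$ tokens and is illegal if fewer than $j$ tokens remain. Quantum variation: a position is a nonempty finite set $\langle G_1,\ldots,G_n\rangle$ of classical positions; a classical move is legal if legal in some $G_i$; a Q-move is a nonempty set of legal classical moves $\{m_1,\ldots,m_k\}$, leading to the superposition of all legal results of applying some $m_j$ to some $G_i$. Ruleset A (subscript $A$): only Q-moves consisting of at least two distinct classical moves are allowed. The player with no allowed Q-move loses. $\equiv$ is game equivalence (same outcome in every disjunctive sum), and $*k$ is the value of a classical Nim heap of $k$ tokens ($*0=0$). *)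

theory Defs
  imports Main "HOL-Library.FSet"
begin

inductive win and lose for mv :: "'s \<Rightarrow> 's \<Rightarrow> bool" where
  win_intro: "mv s s' \<Longrightarrow> lose mv s' \<Longrightarrow> win mv s"
| lose_intro: "(\<forall>s'. mv s s' \<longrightarrow> win mv s') \<Longrightarrow> lose mv s"

definition sum_mv :: "('a \<Rightarrow> 'a \<Rightarrow> bool) \<Rightarrow> ('b \<Rightarrow> 'b \<Rightarrow> bool)
    \<Rightarrow> ('a \<times> 'b) \<Rightarrow> ('a \<times> 'b) \<Rightarrow> bool" where
  "sum_mv mA mB p q \<longleftrightarrow>
     (mA (fst p) (fst q) \<and> snd q = snd p) \<or> (fst q = fst p \<and> mB (snd p) (snd q))"

text \<open>All short impartial games, as finite trees of options.\<close>

datatype igame = Game (opts: "igame fset")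

definition igame_mv :: "igame \<Rightarrow> igame \<Rightarrow> bool" where
  "igame_mv G H \<longleftrightarrow> H |\<in>| opts G"

definition game_equiv :: "('a \<Rightarrow> 'a \<Rightarrow> bool) \<Rightarrow> 'a \<Rightarrow> ('b \<Rightarrow> 'b \<Rightarrow> bool) \<Rightarrow> 'b \<Rightarrow> bool" where
  "game_equiv mA a mB b \<longleftrightarrow>
     (\<forall>X :: igame.
        (win (sum_mv mA igame_mv) (a, X) \<longleftrightarrow> win (sum_mv mB igame_mv) (b, X)) \<and>
        (lose (sum_mv mA igame_mv) (a, X) \<longleftrightarrow> lose (sum_mv mB igame_mv) (b, X)))"

text \<open>Nim(x): remove j \<ge> 1 tokens, j \<le> x. The position *k is nim heap k.\<close>

definition nim_mv :: "nat \<Rightarrow> nat \<Rightarrow> bool" where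
  "nim_mv x y \<longleftrightarrow> (\<exists>j. 1 \<le> j \<and> j \<le> x \<and> y = x - j)"

text \<open>A superposition of single Nim heaps \<langle>Nim(i_1),...,Nim(i_l)\<rangle> is represented by
the (finite, nonempty) set of heap sizes.\<close>

definition legal_move :: "nat set \<Rightarrow> nat \<Rightarrow> bool" where
  "legal_move S j \<longleftrightarrow> 1 \<le> j \<and> (\<exists>i\<in>S. j \<le> i)"

definition qmove_result :: "nat set \<Rightarrow> nat set \<Rightarrow> nat set" where
  "qmove_result S M = {i - j | i j. i \<in> S \<and> j \<in> M \<and> j \<le> i}"

definition qnimA_mv :: "nat set \<Rightarrow> nat set \<Rightarrow> bool" where
  "qnimA_mv S T \<longleftrightarrow>
     (\<exists>M. finite M \<and> 2 \<le> card M \<and> (\<forall>j\<in>M. legal_move S j) \<and> T = qmove_result S M)"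

end

theory Submission
  imports Defs
begin

lemma bisim_aux:
  assumes bwd: "\<And>a b b'. R a b \<Longrightarrow> mB b b' \<Longrightarrow> \<exists>a'. mA a a' \<and> R a' b'"
    and fwd: "\<And>a b a'. R a b \<Longrightarrow> mA a a' \<Longrightarrow> \<exists>b'. mB b b' \<and> R a' b'"
  shows "win (sum_mv mA mC) p \<Longrightarrow> (\<forall>b. R (fst p) b \<longrightarrow> win (sum_mv mB mC) (b, snd p))"
    and "lose (sum_mv mA mC) p \<Longrightarrow> (\<forall>b. R (fst p) b \<longrightarrow> lose (sum_mv mB mC) (b, snd p))"
proof (induction rule: win_lose.inducts)
  case (win_intro s s')
  show ?case
  proof (intro allI impI)
    fix b assume Rb: "R (fst s) b"
    from win_intro(1) consider "mA (fst s) (fst s')" "snd s' = snd s"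
      | "fst s' = fst s" "mC (snd s) (snd s')" unfolding sum_mv_def by blast
    then show "win (sum_mv mB mC) (b, snd s)"
    proof cases
      case 1
      then obtain b' where "mB b b'" "R (fst s') b'" using fwd Rb by blast
      note bb = this
      have L: "lose (sum_mv mB mC) (b', snd s')" using win_intro(3) bb(2) by blast
      have "sum_mv mB mC (b, snd s) (b', snd s')" using 1 bb(1) by (simp add: sum_mv_def)
      then show ?thesis using L by (rule win_lose.win_intro)
    next
      case 2
      have L: "lose (sum_mv mB mC) (b, snd s')" using win_intro(3) Rb 2 by auto
      have "sum_mv mB mC (b, snd s) (b, snd s')" using 2 by (simp add: sum_mv_def)
      then show ?thesis using L by (rule win_lose.win_intro)
    qed
  qed
next
  case (lose_intro s)
  show ?case
  proof (intro allI impI)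
    fix b assume Rb: "R (fst s) b"
    show "lose (sum_mv mB mC) (b, snd s)"
    proof (rule win_lose.lose_intro, intro allI impI)
      fix q assume q: "sum_mv mB mC (b, snd s) q"
      then consider "mB b (fst q)" "snd q = snd s"
        | "fst q = b" "mC (snd s) (snd q)" unfolding sum_mv_def by auto
      then show "win (sum_mv mB mC) q"
      proof cases
        case 1
        then obtain a' where a': "mA (fst s) a'" "R a' (fst q)" using bwd Rb by blast
        have "sum_mv mA mC s (a', snd s)" using a' by (auto simp: sum_mv_def)
        then show ?thesis using lose_intro a' 1 by (cases q) auto
      next
        case 2
        have "sum_mv mA mC s (fst s, snd q)" using 2 by (auto simp: sum_mv_def)
        then show ?thesis using lose_intro Rb 2 by (cases q) auto
      qed
    qed
  qed
qed

lemma bisim_equiv: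
  assumes bwd: "\<And>a b b'. R a b \<Longrightarrow> mB b b' \<Longrightarrow> \<exists>a'. mA a a' \<and> R a' b'"
    and fwd: "\<And>a b a'. R a b \<Longrightarrow> mA a a' \<Longrightarrow> \<exists>b'. mB b b' \<and> R a' b'"
    and "R a b"
  shows "game_equiv mA a mB b"
proof -
  show ?thesis unfolding game_equiv_def
  proof (intro allI conjI iffI)
    fix X
    show "win (sum_mv mA igame_mv) (a, X) \<Longrightarrow> win (sum_mv mB igame_mv) (b, X)"
      using bisim_aux(1)[of R mB mA, OF bwd fwd, where p="(a,X)"] assms(3) by auto
    show "lose (sum_mv mA igame_mv) (a, X) \<Longrightarrow> lose (sum_mv mB igame_mv) (b, X)"
      using bisim_aux(2)[of R mB mA, OF bwd fwd, where p="(a,X)"] assms(3) by auto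
    show "win (sum_mv mB igame_mv) (b, X) \<Longrightarrow> win (sum_mv mA igame_mv) (a, X)"
      using bisim_aux(1)[of "\<lambda>x y. R y x" mA mB, OF fwd bwd, where p="(b,X)"] assms(3) by auto
    show "lose (sum_mv mB igame_mv) (b, X) \<Longrightarrow> lose (sum_mv mA igame_mv) (a, X)"
      using bisim_aux(2)[of "\<lambda>x y. R y x" mA mB, OF fwd bwd, where p="(b,X)"] assms(3) by auto
  qed
qed

definition RR :: "nat set \<Rightarrow> nat \<Rightarrow> bool" where
  "RR S n \<longleftrightarrow> finite S \<and> S \<noteq> {} \<and> n = Max S - 1"

lemma result_props:
  assumes "finite S" "S \<noteq> {}" "finite M" "M \<noteq> {}" "\<forall>j\<in>M. legal_move S j"
  shows "finite (qmove_result S M) \<and> qmove_result S M \<noteq> {} \<and>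
         Max (qmove_result S M) = Max S - Min M"
proof -
  let ?T = "qmove_result S M"
  have fin: "finite ?T"
  proof -
    have "?T \<subseteq> (\<lambda>(i,j). i - j) ` (S \<times> M)" unfolding qmove_result_def by auto
    thus ?thesis using assms by (meson finite_SigmaI finite_imageI finite_subset)
  qed
  have mM: "Min M \<in> M" using assms by simp
  have lm: "Min M \<le> Max S" using assms(5) mM assms(1) unfolding legal_move_def
    using Max_ge order.trans by blast
  have mem: "Max S - Min M \<in> ?T" unfolding qmove_result_def
    using mM lm Max_in[OF assms(1,2)] by blast
  have ub: "\<forall>t\<in>?T. t \<le> Max S - Min M"
  proof
    fix t assume "t \<in> ?T"
    then obtain i j where "t = i - j" "i \<in> S" "j \<in> M" "j \<le> i" unfolding qmove_result_def by auto
    moreover have "i \<le> Max S" using \<open>i \<in> S\<close> assms(1) by simp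
    moreover have "Min M \<le> j" using \<open>j \<in> M\<close> assms(3) by simp
    ultimately show "t \<le> Max S - Min M" by linarith
  qed
  have "Max ?T = Max S - Min M"
    using fin mem ub by (intro antisym Max_le_iff[THEN iffD2] Max_ge) auto
  thus ?thesis using fin mem by auto
qed

lemma fwd_RR:
  assumes "RR S n" "qnimA_mv S T"
  shows "\<exists>n'. nim_mv n n' \<and> RR T n'"
proof -
  obtain M where M: "finite M" "2 \<le> card M" "\<forall>j\<in>M. legal_move S j" "T = qmove_result S M"
    using assms(2) unfolding qnimA_mv_def by blast
  have fS: "finite S" "S \<noteq> {}" and n: "n = Max S - 1" using assms(1) unfolding RR_def by auto
  have Mne: "M \<noteq> {}" using M(2) by auto
  have R: "finite T" "T \<noteq> {}" "Max T = Max S - Min M"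
    using result_props[OF fS M(1) Mne M(3)] M(4) by auto
  have mM: "Min M \<in> M" using M(1) Mne by simp
  have "card (M - {Min M}) = card M - 1" using mM M(1) by simp
  hence "M - {Min M} \<noteq> {}" using M(2) by (intro notI) simp
  then obtain j where j: "j \<in> M" "j \<noteq> Min M" by blast
  have "Min M \<le> j" using j M(1) by simp
  hence lt: "Min M < j" using j by simp
  have "j \<le> Max S" using M(3) j fS unfolding legal_move_def using Max_ge order.trans by blast
  have m1: "1 \<le> Min M" using M(3) mM unfolding legal_move_def by blast
  show ?thesis
    apply (rule exI[of _ "Max T - 1"])
    using R lt \<open>j \<le> Max S\<close> m1 n unfolding RR_def nim_mv_def
    by (auto intro!: exI[of _ "Min M"])
qed

lemma bwd_RR:
  assumes "RR S n" "nim_mv n n'"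
  shows "\<exists>T. qnimA_mv S T \<and> RR T n'"
proof -
  have fS: "finite S" "S \<noteq> {}" and n: "n = Max S - 1" using assms(1) unfolding RR_def by auto
  obtain j where j: "1 \<le> j" "j \<le> n" "n' = n - j" using assms(2) unfolding nim_mv_def by auto
  define M where "M = {j, Max S}"
  have jk: "j < Max S" using j n by linarith
  have MS: "Max S \<in> S" using fS by simp
  have fM: "finite M" "M \<noteq> {}" and cM: "2 \<le> card M" using jk unfolding M_def by auto
  have leg: "\<forall>i\<in>M. legal_move S i" unfolding M_def legal_move_def using MS j jk by (auto intro!: bexI[of _ "Max S"])
  have minM: "Min M = j" unfolding M_def using jk by simp
  have R: "finite (qmove_result S M)" "qmove_result S M \<noteq> {}"
     "Max (qmove_result S M) = Max S - j"
    using result_props[OF fS fM leg] minM by auto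
  show ?thesis
    apply (rule exI[of _ "qmove_result S M"])
    using R fM cM leg j n MS jk unfolding qnimA_mv_def RR_def by auto
qed

theorem lemma1:
  fixes hs :: "nat list" and k :: nat
  assumes "hs \<noteq> []"
    and "k = Max (set hs)"
    and "1 \<le> k"
  shows "game_equiv qnimA_mv (set hs) nim_mv (k - 1)"
  apply (rule bisim_equiv[where R = RR])
  using bwd_RR apply blast
  using fwd_RR apply blast
  using assms unfolding RR_def by auto

end
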